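(* Let $N \ge 1$ be an integer and let $a, b$ be $N$-bit integers in two's complement representation, with bits $a_0 a_1 \cdots a_{N-1}$ and $b_0 b_1 \cdots b_{N-1}$, where bit $0$ is the most significant bit. Define the bipolar encodings $\hat{a}_j = 2a_j - 1 \in \{-1,+1\}$ and $\hat{b}_j = 2b_j - 1 \in \{-1,+1\}$ for $0 \le j \le N-1$. For each $i$ with $0 \le i \le N-1$ set \[ D_i = \sum_{j=i}^{N-1} \bigl(\hat{a}_j - \hat{b}_j\bigr)\, 2^{N-2-j}, \qquad P = 2^{N-1-i}, \] \[ z_1 = D_i + P + 1,\quad z_2 = D_i + P,\quad z_3 = -D_i,\quad z_4 = -D_i - 1,\quad z_5 = D_i - P + 1,\quad z_6 = D_i - P, \] and \[ r_i = 2\bigl[\mathrm{ReLU}(z_1) - \mathrm{ReLU}(z_2) + \mathrm{ReLU}(z_3) - \mathrm{ReLU}(z_4) + \mathrm{ReLU}(z_5) - \mathrm{ReLU}(z_6)\bigr] - 3, \] where $\mathrm{ReLU}(t) = \max(t,0)$. Then for every $i \in \{0,\dots,N-1\}$ we have $r_i \in \{-1,+1\}$, and $r_i = 2c_i - 1$, where $c_i$ is bit $i$ (bit $0$ being the most significant) of the $N$-bit two's complement representation of $a - b$ (computed modulo $2^N$).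
   Context: Bipolar encoding maps a binary digit $0$ to $-1$ and $1$ to $+1$. An $N$-bit two's complement integer is represented by its bit string $b_0 b_1\cdots b_{N-1}$ with $b_0$ the most significant bit; the difference $a-b$ is taken in $N$-bit two's complement arithmetic, i.e. modulo $2^N$ (wrapping on overflow). *)

theory Defs
  imports Complex_Main
begin

definition relu :: "real \<Rightarrow> real" where
  "relu t = max t 0"

text \<open>Bits are indexed 0..N-1 with bit 0 the most significant; bit values are 0 or 1.\<close>

definition tc_value :: "nat \<Rightarrow> (nat \<Rightarrow> int) \<Rightarrow> int" where
  "tc_value N x = - x 0 * 2 ^ (N - 1) + (\<Sum>j\<in>{1..<N}. x j * 2 ^ (N - 1 - j))"

definition tc_bit :: "nat \<Rightarrow> int \<Rightarrow> nat \<Rightarrow> int" where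
  "tc_bit N v i = ((v mod 2 ^ N) div 2 ^ (N - 1 - i)) mod 2"

definition bipolar :: "int \<Rightarrow> real" where
  "bipolar x = 2 * real_of_int x - 1"

definition D_val :: "nat \<Rightarrow> (nat \<Rightarrow> int) \<Rightarrow> (nat \<Rightarrow> int) \<Rightarrow> nat \<Rightarrow> real" where
  "D_val N a b i = (\<Sum>j\<in>{i..<N}. (bipolar (a j) - bipolar (b j)) * 2 powi (int N - 2 - int j))"

definition r_val :: "nat \<Rightarrow> (nat \<Rightarrow> int) \<Rightarrow> (nat \<Rightarrow> int) \<Rightarrow> nat \<Rightarrow> real" where
  "r_val N a b i =
     (let D = D_val N a b i; P = (2::real) ^ (N - 1 - i);
          z1 = D + P + 1; z2 = D + P; z3 = - D; z4 = - D - 1; z5 = D - P + 1; z6 = D - P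
      in 2 * (relu z1 - relu z2 + relu z3 - relu z4 + relu z5 - relu z6) - 3)"

end

theory Submission
  imports Defs
begin

lemma low_bound:
  assumes x: "\<And>j. j < N \<Longrightarrow> x j \<in> {0, 1::int}" and "i \<le> N"
  shows "0 \<le> (\<Sum>j\<in>{i..<N}. x j * 2 ^ (N - 1 - j)) \<and> (\<Sum>j\<in>{i..<N}. x j * 2 ^ (N - 1 - j)) \<le> 2 ^ (N - i) - 1"
  using assms(2)
proof (induction i rule: inc_induct)
  case base
  then show ?case by simp
next
  case (step n)
  have e: "(\<Sum>j\<in>{n..<N}. x j * 2 ^ (N - 1 - j)) = x n * 2 ^ (N - 1 - n) + (\<Sum>j\<in>{Suc n..<N}. x j * 2 ^ (N - 1 - j))"
    using step(2) by (simp add: sum.atLeast_Suc_lessThan)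
  have p1: "(2::int) ^ (N - n) = 2 * 2 ^ (N - 1 - n)"
  proof -
    have "N - n = Suc (N - 1 - n)" using step(2) by simp
    then show ?thesis by simp
  qed
  have p2: "(2::int) ^ (N - Suc n) = 2 ^ (N - 1 - n)" by simp
  have "x n \<in> {0,1}" using x step(2) by blast
  then have xn: "x n = 0 \<or> x n = 1" by simp
  have IH: "0 \<le> (\<Sum>j\<in>{Suc n..<N}. x j * 2 ^ (N - 1 - j)) \<and> (\<Sum>j\<in>{Suc n..<N}. x j * 2 ^ (N - 1 - j)) \<le> 2 ^ (N - 1 - n) - 1"
    using step(3) by (simp only: p2)
  have pos: "(0::int) < 2 ^ (N - 1 - n)" by simp
  show ?case unfolding e p1 using IH pos xn by auto
qed

lemma dval_eq:
  assumes "i \<le> N"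
  shows "D_val N a b i = of_int (\<Sum>j\<in>{i..<N}. (a j - b j) * 2 ^ (N - 1 - j))"
  unfolding D_val_def of_int_sum
proof (rule sum.cong)
  fix j assume j: "j \<in> {i..<N}"
  have "(2::real) powi (int N - 2 - int j + 1) = 2 powi (int N - 2 - int j) * 2 powi 1"
    by (rule power_int_add) simp
  then have "(2::real) powi (int N - 2 - int j) * 2 = 2 powi (int N - 2 - int j + 1)"
    by simp
  also have "int N - 2 - int j + 1 = int (N - 1 - j)" using j by auto
  finally have h: "(2::real) powi (int N - 2 - int j) * 2 = 2 ^ (N - 1 - j)"
    by (simp add: power_int_of_nat)
  show "(bipolar (a j) - bipolar (b j)) * 2 powi (int N - 2 - int j) =
        real_of_int ((a j - b j) * 2 ^ (N - 1 - j))"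
    using h unfolding bipolar_def by (simp add: algebra_simps)
qed simp

lemma relu_step: "relu (real_of_int x + 1) - relu (real_of_int x) = (if x \<ge> 0 then 1 else 0)"
proof (cases "x \<ge> 0")
  case True then show ?thesis by (simp add: relu_def)
next
  case False then have "real_of_int x \<le> -1" by simp
  then show ?thesis using False by (simp add: relu_def)
qed

lemma bitlem:
  fixes w m P t :: int
  assumes "P > 0" "w mod (2*P) = m" "P*t \<le> m" "m < P*t + P"
  shows "w div P mod 2 = t mod 2"
proof -
  have "w = (2*P) * (w div (2*P)) + m" by (metis assms(2) mult.commute div_mult_mod_eq)
  then have "w = P * (2 * (w div (2*P)) + t) + (m - P*t)" by (simp add: algebra_simps)
  then have "w div P = 2 * (w div (2*P)) + t"
    by (rule int_div_pos_eq) (use assms in auto)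
  then show ?thesis by simp
qed

lemma sum_split_diff:
  "(\<Sum>j\<in>A. (a j - b j) * c j) = (\<Sum>j\<in>A. a j * c j) - (\<Sum>j\<in>A. (b j :: int) * c j)"
  by (simp add: left_diff_distrib sum_subtractf)

lemma tc_full:
  assumes "N \<ge> 1"
  shows "tc_value N x = (\<Sum>j\<in>{0..<N}. x j * 2 ^ (N - 1 - j)) - x 0 * 2 ^ N"
proof -
  have "(\<Sum>j\<in>{0..<N}. x j * 2 ^ (N - 1 - j)) = x 0 * 2 ^ (N - 1) + (\<Sum>j\<in>{1..<N}. x j * 2 ^ (N - 1 - j))"
    using assms by (simp add: sum.atLeast_Suc_lessThan)
  moreover have "(2::int) ^ N = 2 * 2 ^ (N - 1)"
    using assms by (metis Suc_diff_1 less_le_trans zero_less_one power_Suc)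
  ultimately show ?thesis unfolding tc_value_def by (simp add: algebra_simps)
qed

theorem proposition1:
  fixes N :: nat and a b :: "nat \<Rightarrow> int"
  assumes "N \<ge> 1"
    and "\<And>j. j < N \<Longrightarrow> a j \<in> {0, 1}"
    and "\<And>j. j < N \<Longrightarrow> b j \<in> {0, 1}"
  shows "\<forall>i < N. r_val N a b i \<in> {-1, 1} \<and>
           r_val N a b i = 2 * real_of_int (tc_bit N (tc_value N a - tc_value N b) i) - 1"
proof (intro allI impI)
  fix i assume i: "i < N"
  define d where "d j = a j - b j" for j
  define Di where "Di = (\<Sum>j\<in>{i..<N}. d j * 2 ^ (N - 1 - j))"
  define P where "P = (2::int) ^ (N - 1 - i)"
  define Q where "Q = (2::int) ^ (N - i)"
  have QP: "Q = 2 * P" unfolding Q_def P_def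
  proof -
    have "N - i = Suc (N - 1 - i)" using i by simp
    then show "(2::int) ^ (N - i) = 2 * 2 ^ (N - 1 - i)" by simp
  qed
  have Ppos: "P > 0" unfolding P_def by simp
  have Da: "0 \<le> (\<Sum>j\<in>{i..<N}. a j * 2 ^ (N - 1 - j)) \<and> (\<Sum>j\<in>{i..<N}. a j * 2 ^ (N - 1 - j)) \<le> Q - 1"
    unfolding Q_def by (rule low_bound) (use assms i in auto)
  have Db: "0 \<le> (\<Sum>j\<in>{i..<N}. b j * 2 ^ (N - 1 - j)) \<and> (\<Sum>j\<in>{i..<N}. b j * 2 ^ (N - 1 - j)) \<le> Q - 1"
    unfolding Q_def by (rule low_bound) (use assms i in auto)
  have Dsplit: "Di = (\<Sum>j\<in>{i..<N}. a j * 2 ^ (N - 1 - j)) - (\<Sum>j\<in>{i..<N}. b j * 2 ^ (N - 1 - j))"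
    unfolding Di_def d_def by (rule sum_split_diff)
  have Dlo: "- Q < Di" and Dhi: "Di < Q" using Da Db Dsplit by linarith+
  define v where "v = tc_value N a - tc_value N b"
  have F: "v = (\<Sum>j\<in>{0..<N}. d j * 2 ^ (N - 1 - j)) - d 0 * 2 ^ N"
    unfolding v_def d_def tc_full[OF assms(1)] sum_split_diff by (simp add: algebra_simps)
  have F2: "(\<Sum>j\<in>{0..<N}. d j * 2 ^ (N - 1 - j)) = (\<Sum>j\<in>{0..<i}. d j * 2 ^ (N - 1 - j)) + Di"
    unfolding Di_def using i by (simp add: sum.atLeastLessThan_concat)
  have dv1: "Q dvd (\<Sum>j\<in>{0..<i}. d j * 2 ^ (N - 1 - j))"
  proof (rule dvd_sum)
    fix j assume "j \<in> {0..<i}"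
    then have "N - i \<le> N - 1 - j" using i by auto
    then have "Q dvd 2 ^ (N - 1 - j)" unfolding Q_def by (rule le_imp_power_dvd)
    then show "Q dvd d j * 2 ^ (N - 1 - j)" by simp
  qed
  have dvN: "Q dvd 2 ^ N" unfolding Q_def by (rule le_imp_power_dvd) simp
  have "Q dvd v - Di" unfolding F F2 using dv1 dvN by simp
  then have vQ: "v mod Q = Di mod Q" by (simp add: mod_eq_dvd_iff)
  have wQ: "(v mod 2 ^ N) mod Q = Di mod Q" using vQ dvN by (simp add: mod_mod_cancel)
  have bit: "tc_bit N v i = ((v mod 2 ^ N) div P) mod 2" unfolding tc_bit_def P_def ..
  have Dreal: "D_val N a b i = real_of_int Di"
    unfolding dval_eq[OF less_imp_le[OF i]] Di_def d_def ..
  have Preal: "(2::real) ^ (N - 1 - i) = real_of_int P" unfolding P_def by simp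
  have r: "r_val N a b i = 2 * ((if Di + P \<ge> 0 then 1 else 0) + (if - Di - 1 \<ge> 0 then 1 else 0)
      + (if Di - P \<ge> 0 then 1 else 0)) - 3"
  proof -
    have e1: "relu (real_of_int Di + real_of_int P + 1) - relu (real_of_int Di + real_of_int P) = (if Di + P \<ge> 0 then 1 else 0)"
      using relu_step[of "Di + P"] by simp
    have e2: "relu (- real_of_int Di) - relu (- real_of_int Di - 1) = (if - Di - 1 \<ge> 0 then 1 else 0)"
      using relu_step[of "- Di - 1"] by simp
    have e3: "relu (real_of_int Di - real_of_int P + 1) - relu (real_of_int Di - real_of_int P) = (if Di - P \<ge> 0 then 1 else 0)"
      using relu_step[of "Di - P"] by simp
    show ?thesis unfolding r_val_def Let_def Dreal Preal using e1 e2 e3 by simp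
  qed
  have "r_val N a b i = 2 * real_of_int (tc_bit N v i) - 1 \<and> tc_bit N v i \<in> {0,1}"
  proof (cases "Di \<ge> 0")
    case True
    then have m: "(v mod 2 ^ N) mod (2*P) = Di" using wQ QP Dhi by simp
    show ?thesis
    proof (cases "Di \<ge> P")
      case True
      have "tc_bit N v i = 1 mod 2" unfolding bit by (rule bitlem[OF Ppos m]) (use True Dhi QP in auto)
      then show ?thesis unfolding r using True Ppos by simp
    next
      case False
      have "tc_bit N v i = 0 mod 2" unfolding bit by (rule bitlem[OF Ppos m]) (use False \<open>Di \<ge> 0\<close> in auto)
      then show ?thesis unfolding r using False \<open>Di \<ge> 0\<close> Ppos by simp
    qed
  next
    case False
    then have "Di mod Q = Di + Q" using Dlo by (simp add: int_mod_pos_eq[of Di Q "-1" "Di + Q"])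
    then have m: "(v mod 2 ^ N) mod (2*P) = Di + 2*P" using wQ QP by simp
    show ?thesis
    proof (cases "Di \<ge> - P")
      case True
      have "tc_bit N v i = 1 mod 2" unfolding bit by (rule bitlem[OF Ppos m]) (use True False in auto)
      then show ?thesis unfolding r using True False Ppos by simp
    next
      case c2: False
      have "tc_bit N v i = 0 mod 2" unfolding bit by (rule bitlem[OF Ppos m]) (use c2 Dlo QP in auto)
      then show ?thesis unfolding r using c2 False Ppos by simp
    qed
  qed
  then show "r_val N a b i \<in> {-1, 1} \<and>
           r_val N a b i = 2 * real_of_int (tc_bit N (tc_value N a - tc_value N b) i) - 1"
    unfolding v_def by auto
qed

end
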